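(* Let $U=\{(x_1,x_2,p_1,p_2)\in\mathbb R^2\times(\mathbb R^2\setminus\{0\}) : x_1p_1+x_2p_2\neq 0\}$, and on $U$ define $\bar D=x_1p_1+x_2p_2$, $\bar J^0=x_1p_2-x_2p_1$, $\bar J^1=-x_2\sqrt{p_1^2+p_2^2}$, $\bar J^2=x_1\sqrt{p_1^2+p_2^2}$. For real constants $a,b,c$ let $$\bar H_{a,b,c}=\operatorname{sign}(\bar D)\,\big(\bar D+a\bar J^0+b\bar J^1+c\bar J^2\big).$$ Then $\bar H_{a,b,c}$ is bounded from below on $U$ if and only if $a=b=c=0$; in that case $\bar H_{0,0,0}=|\bar D|\ge 0$.
   Context: Here $(x_1,x_2,p_1,p_2)$ are coordinates on the physical phase space of the (group-completed) metric-torus sector of 2+1 gravity, and the functions $\bar D$, $\bar J^\mu$ are the projections of the dilatation and Lorentz generators; the functions $\bar H_{a,b,c}$ are the candidate Hamiltonians generating future-directed time evolution along the constant-mean-curvature surfaces. The set $U$ corresponds to the (non-static) physical phase space, on which $\bar D\neq 0$. *)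

theory Defs
  imports Complex_Main
begin

definition U :: "(real \<times> real \<times> real \<times> real) set" where
  "U = {(x1, x2, p1, p2). (p1, p2) \<noteq> (0, 0) \<and> x1 * p1 + x2 * p2 \<noteq> 0}"

definition Dbar :: "real \<Rightarrow> real \<Rightarrow> real \<Rightarrow> real \<Rightarrow> real" where
  "Dbar x1 x2 p1 p2 = x1 * p1 + x2 * p2"

definition J0bar :: "real \<Rightarrow> real \<Rightarrow> real \<Rightarrow> real \<Rightarrow> real" where
  "J0bar x1 x2 p1 p2 = x1 * p2 - x2 * p1"

definition J1bar :: "real \<Rightarrow> real \<Rightarrow> real \<Rightarrow> real \<Rightarrow> real" where
  "J1bar x1 x2 p1 p2 = - x2 * sqrt (p1^2 + p2^2)"

definition J2bar :: "real \<Rightarrow> real \<Rightarrow> real \<Rightarrow> real \<Rightarrow> real" where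
  "J2bar x1 x2 p1 p2 = x1 * sqrt (p1^2 + p2^2)"

definition Hbar :: "real \<Rightarrow> real \<Rightarrow> real \<Rightarrow> real \<times> real \<times> real \<times> real \<Rightarrow> real" where
  "Hbar a b c z = (case z of (x1, x2, p1, p2) \<Rightarrow>
     sgn (Dbar x1 x2 p1 p2) *
       (Dbar x1 x2 p1 p2 + a * J0bar x1 x2 p1 p2 + b * J1bar x1 x2 p1 p2 + c * J2bar x1 x2 p1 p2))"

end

theory Submission
  imports Defs
begin

lemma H000: "Hbar 0 0 0 (x1, x2, p1, p2) = \<bar>Dbar x1 x2 p1 p2\<bar>"
  by (simp add: Hbar_def sgn_mult_abs abs_sgn)

theorem mainTheorem2:
  fixes a b c :: real
  shows "(bdd_below (Hbar a b c ` U) \<longleftrightarrow> (a = 0 \<and> b = 0 \<and> c = 0))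
         \<and> (\<forall>x1 x2 p1 p2. (x1, x2, p1, p2) \<in> U \<longrightarrow>
              Hbar 0 0 0 (x1, x2, p1, p2) = \<bar>Dbar x1 x2 p1 p2\<bar>
              \<and> Hbar 0 0 0 (x1, x2, p1, p2) \<ge> 0)"
proof (intro conjI allI impI)
  show "bdd_below (Hbar a b c ` U) \<longleftrightarrow> (a = 0 \<and> b = 0 \<and> c = 0)"
  proof
    assume "bdd_below (Hbar a b c ` U)"
    then obtain M where M: "\<And>z. z \<in> U \<Longrightarrow> M \<le> Hbar a b c z"
      by (auto simp: bdd_below_def)
    have ab1: "a + b = 0"
    proof (rule ccontr)
      assume h: "a + b \<noteq> 0"
      define t where "t = (2 + c - M) / (a + b)"
      have "(1, t, 1, 0) \<in> U" by (simp add: U_def)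
      hence "M \<le> Hbar a b c (1, t, 1, 0)" by (rule M)
      also have "\<dots> = 1 + c - (a + b) * t"
        by (simp add: Hbar_def Dbar_def J0bar_def J1bar_def J2bar_def algebra_simps)
      also have "\<dots> = M - 1" using h by (simp add: t_def)
      finally show False by simp
    qed
    have ab2: "a - b = 0"
    proof (rule ccontr)
      assume h: "a - b \<noteq> 0"
      define t where "t = (M - 2 + c) / (a - b)"
      have "(-1, t, -1, 0) \<in> U" by (simp add: U_def)
      hence "M \<le> Hbar a b c (-1, t, -1, 0)" by (rule M)
      also have "\<dots> = 1 + (a - b) * t - c"
        by (simp add: Hbar_def Dbar_def J0bar_def J1bar_def J2bar_def algebra_simps)
      also have "\<dots> = M - 1" using h by (simp add: t_def)
      finally show False by simp
    qed
    have a0: "a = 0" "b = 0" using ab1 ab2 by auto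
    have "c = 0"
    proof (rule ccontr)
      assume h: "c \<noteq> 0"
      define t where "t = (M - 2) / c"
      have "(t, 1, 0, 1) \<in> U" by (simp add: U_def)
      hence "M \<le> Hbar a b c (t, 1, 0, 1)" by (rule M)
      also have "\<dots> = 1 + c * t"
        using a0 by (simp add: Hbar_def Dbar_def J0bar_def J1bar_def J2bar_def algebra_simps)
      also have "\<dots> = M - 1" using h by (simp add: t_def)
      finally show False by simp
    qed
    with a0 show "a = 0 \<and> b = 0 \<and> c = 0" by simp
  next
    assume "a = 0 \<and> b = 0 \<and> c = 0"
    then show "bdd_below (Hbar a b c ` U)"
      by (intro bdd_belowI[where m=0]) (auto simp: H000)
  qed
next
  fix x1 x2 p1 p2
  show "Hbar 0 0 0 (x1, x2, p1, p2) = \<bar>Dbar x1 x2 p1 p2\<bar>" by (rule H000)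
  show "Hbar 0 0 0 (x1, x2, p1, p2) \<ge> 0" by (simp add: H000)
qed

end
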